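(* There exists an infinite biosphere $(G,t)$ such that $\mathrm{REF}$ is not downward generic.
   Context: An infinite biosphere is a directed graph $G$ together with a function $t$ assigning a real number $t(v)$ to each vertex, such that: (1) if $v$ is a parent of $w$ (edge from $v$ to $w$) then $t(v)<t(w)$; (2) for every $r\in\mathbb R$ at most finitely many vertices $v$ have $t(v)<r$; (3) every vertex has finitely many children; (4) $G$ is infinite. $w$ is a descendant of $v$ if there is a directed path from $v$ to $w$ of length at least one. $\mathrm{REF}$ is the set of sets $S$ of vertices of $G$ such that every $v\in S$ having infinitely many descendants in $G$ has infinitely many descendants in $S$. For a nonempty linear order $(X,<)$, a descending chain of $G$-subsets indexed by $X$ is a family $\{C_\alpha\}_{\alpha\in X}$ with $C_\beta\subseteq C_\alpha$ whenever $\alpha<\beta$. A set $T$ of $G$-subsets is downward generic if for every descending chain $\{C_\alpha\}_{\alpha\in X}$ of nonempty $G$-subsets with each $C_\alpha\in T$, $\bigcap_\alpha C_\alpha\in T$. *)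

theory Defs
  imports Complex_Main
begin

text \<open>A directed graph is a vertex set V with an edge relation E (an edge (v,w) means
  v is a parent of w).  An infinite biosphere is such a graph with a time function t.\<close>

definition biosphere :: "'v set \<Rightarrow> ('v \<times> 'v) set \<Rightarrow> ('v \<Rightarrow> real) \<Rightarrow> bool" where
  "biosphere V E t \<longleftrightarrow>
     E \<subseteq> V \<times> V \<and>
     (\<forall>v w. (v, w) \<in> E \<longrightarrow> t v < t w) \<and>
     (\<forall>r::real. finite {v \<in> V. t v < r}) \<and>
     (\<forall>v \<in> V. finite {w. (v, w) \<in> E}) \<and>
     infinite V"

definition descendants :: "('v \<times> 'v) set \<Rightarrow> 'v \<Rightarrow> 'v set" where
  "descendants E v = {w. (v, w) \<in> E\<^sup>+}"

definition REF :: "'v set \<Rightarrow> ('v \<times> 'v) set \<Rightarrow> 'v set set" where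
  "REF V E = {S. S \<subseteq> V \<and>
     (\<forall>v \<in> S. infinite (descendants E v) \<longrightarrow> infinite (descendants E v \<inter> S))}"

text \<open>Full downward genericity quantifies over all index types.\<close>
definition downward_generic_idx :: "'i::linorder itself \<Rightarrow> 'v set \<Rightarrow> 'v set set \<Rightarrow> bool" where
  "downward_generic_idx _ V T \<longleftrightarrow>
     (\<forall>(X::'i set) (C::'i \<Rightarrow> 'v set).
        X \<noteq> {} \<longrightarrow>
        (\<forall>\<alpha>\<in>X. \<forall>\<beta>\<in>X. \<alpha> < \<beta> \<longrightarrow> C \<beta> \<subseteq> C \<alpha>) \<longrightarrow>
        (\<forall>\<alpha>\<in>X. C \<alpha> \<subseteq> V \<and> C \<alpha> \<noteq> {} \<and> C \<alpha> \<in> T) \<longrightarrow>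
        (\<Inter>\<alpha>\<in>X. C \<alpha>) \<in> T)"

end

theory Submission
  imports Defs
begin

definition Esucc :: "(nat \<times> nat) set" where "Esucc = {(n, Suc n) | n. True}"

lemma trancl_Esucc: "(a, b) \<in> Esucc\<^sup>+ \<longleftrightarrow> a < b"
proof
  assume "(a, b) \<in> Esucc\<^sup>+"
  then show "a < b" by (induction rule: trancl_induct) (auto simp: Esucc_def)
next
  assume "a < b"
  then show "(a, b) \<in> Esucc\<^sup>+"
  proof (induction b)
    case 0 then show ?case by simp
  next
    case (Suc b)
    have e: "(b, Suc b) \<in> Esucc" by (simp add: Esucc_def)
    show ?case
    proof (cases "a < b")
      case True then show ?thesis using Suc e by (meson trancl.trancl_into_trancl)
    next
      case False then have "a = b" using Suc by simp
      then show ?thesis using e by auto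
    qed
  qed
qed

lemma desc_Esucc: "descendants Esucc a = {m. a < m}"
  by (auto simp: descendants_def trancl_Esucc)

lemma inf_gt: "infinite {m::nat. k < m}"
  using infinite_Ioi[of k] by (simp add: greaterThan_def)

theorem mainTheorem8:
  shows "\<exists>(V::nat set) E t. biosphere V E t \<and> \<not> downward_generic_idx TYPE(nat) V (REF V E)"
proof (intro exI conjI)
  show "biosphere UNIV Esucc (\<lambda>n. real n)"
    unfolding biosphere_def
  proof (intro conjI allI impI ballI)
    fix r :: real
    have "{v \<in> (UNIV::nat set). real v < r} \<subseteq> {..nat \<lceil>r\<rceil>}"
      by auto linarith
    then show "finite {v \<in> (UNIV::nat set). real v < r}" using finite_subset by blast
  next
    fix v :: nat
    have "{w. (v, w) \<in> Esucc} = {Suc v}" by (auto simp: Esucc_def)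
    then show "finite {w. (v, w) \<in> Esucc}" by simp
  qed (auto simp: Esucc_def)
  show "\<not> downward_generic_idx TYPE(nat) UNIV (REF UNIV Esucc)"
  proof
    assume H: "downward_generic_idx TYPE(nat) UNIV (REF UNIV Esucc)"
    define C where "C = (\<lambda>n::nat. insert 0 {m. n \<le> m})"
    have inC: "C n \<in> REF UNIV Esucc" for n
    proof -
      have "infinite (descendants Esucc v \<inter> C n)" for v
      proof
        assume "finite (descendants Esucc v \<inter> C n)"
        moreover have "{m. max v n < m} \<subseteq> descendants Esucc v \<inter> C n"
          by (auto simp: desc_Esucc C_def)
        ultimately show False using inf_gt finite_subset by blast
      qed
      then show ?thesis by (auto simp: REF_def)
    qed
    have "(\<Inter>n\<in>(UNIV::nat set). C n) \<in> REF UNIV Esucc"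
      using H unfolding downward_generic_idx_def
      apply (elim allE[of _ UNIV] allE[of _ C])
      using inC by (auto simp: C_def)
    moreover have "(\<Inter>n\<in>(UNIV::nat set). C n) = {0}"
      by (auto simp: C_def) (metis Suc_n_not_le_n)
    ultimately have "{0::nat} \<in> REF UNIV Esucc" by simp
    moreover have "infinite (descendants Esucc 0)" using inf_gt[of 0] by (simp add: desc_Esucc)
    ultimately show False by (auto simp: REF_def desc_Esucc)
  qed
qed

end
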